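(* Let $p>0$, $x\ge0$, $0<y<1$, and $q>1$. Define $$\bar c_{p,q}=\frac{p+q-1}{q}\,(1-y)\,\frac{M(p+q,p,xy/2)}{M(p+q-1,p,xy/2)}.$$ Then both $y_k=B_{p,k}(x,y)$ and $y_k=\bar B_{p,k}(x,y)$ satisfy $$y_{q+1}-(1+\bar c_{p,q})\,y_q+\bar c_{p,q}\,y_{q-1}=0 .$$
   Context: For $p,q>0$ and $0\le y\le 1$, $I_y(p,q)=\frac{1}{B(p,q)}\int_0^y t^{p-1}(1-t)^{q-1}\,dt$ is the regularized incomplete beta function, with $B(p,q)=\Gamma(p)\Gamma(q)/\Gamma(p+q)$. The cumulative noncentral beta distribution is $B_{p,q}(x,y)=e^{-x/2}\sum_{j=0}^\infty \frac{1}{j!}\left(\frac x2\right)^j I_y(p+j,q)$ for $x\ge0$, and its complement is $\bar B_{p,q}(x,y)=1-B_{p,q}(x,y)$. $M(a,b,z)=\sum_{n\ge0}\frac{(a)_n}{(b)_n}\frac{z^n}{n!}$ is Kummer's confluent hypergeometric function, and $(a)_n$ is the Pochhammer symbol. *)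

theory Defs
  imports "HOL-Analysis.Analysis"
begin

definition inc_beta :: "real \<Rightarrow> real \<Rightarrow> real \<Rightarrow> real" where
  "inc_beta y p q =
     integral {0..y} (\<lambda>t. t powr (p - 1) * (1 - t) powr (q - 1)) / Beta p q"

definition nc_beta :: "real \<Rightarrow> real \<Rightarrow> real \<Rightarrow> real \<Rightarrow> real" where
  "nc_beta p q x y =
     exp (- x / 2) * (\<Sum>j. (x / 2) ^ j / fact j * inc_beta y (p + real j) q)"

definition nc_beta_compl :: "real \<Rightarrow> real \<Rightarrow> real \<Rightarrow> real \<Rightarrow> real" where
  "nc_beta_compl p q x y = 1 - nc_beta p q x y"

definition kummerM :: "real \<Rightarrow> real \<Rightarrow> real \<Rightarrow> real" where
  "kummerM a b z = (\<Sum>n. pochhammer a n / pochhammer b n * z ^ n / fact n)"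

end

theory Submission
  imports Defs
begin

lemma J_integrable:
  fixes a b y :: real
  assumes "a > 0" "b > 0" "0 \<le> y" "y \<le> 1"
  shows "(\<lambda>t. t powr (a - 1) * (1 - t) powr (b - 1)) integrable_on {0..y}"
  by (rule integrable_on_subinterval[OF integrable_Beta'[OF assms(1,2)]]) (use assms in auto)

lemma div_div_cancel: "(s::real) \<noteq> 0 \<Longrightarrow> (A / s) / (C / s) = A / C"
  by (cases "C = 0") (simp_all add: field_simps)

lemma inc_beta_rec:
  fixes p q y :: real
  assumes p: "p > 0" and q: "q > 0" and y: "0 < y" "y < 1"
  shows "inc_beta y p (q + 1) - inc_beta y p q = y powr p * (1 - y) powr q / (q * Beta p q)"
proof -
  define J where "J a b = integral {0..y} (\<lambda>t. t powr (a - 1) * (1 - t) powr (b - 1))" for a b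
  have int1: "(\<lambda>t. t powr (p - 1) * (1 - t) powr (q + 1 - 1)) integrable_on {0..y}"
    using J_integrable[of p "q+1" y] p q y by auto
  have int2: "(\<lambda>t. t powr (p + 1 - 1) * (1 - t) powr (q - 1)) integrable_on {0..y}"
    using J_integrable[of "p+1" q y] p q y by auto
  have ftc: "((\<lambda>t. p * (t powr (p - 1) * (1 - t) powr (q + 1 - 1)) - q * (t powr (p + 1 - 1) * (1 - t) powr (q - 1)))
      has_integral (y powr p * (1 - y) powr q - 0 powr p * (1 - 0) powr q)) {0..y}"
  proof (rule fundamental_theorem_of_calculus_interior)
    show "continuous_on {0..y} (\<lambda>t. t powr p * (1 - t) powr q)"
      using p y by (intro continuous_intros continuous_on_powr') auto
  next
    fix t assume t: "t \<in> {0<..<y}"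
    have "((\<lambda>t. t powr p * (1 - t) powr q) has_real_derivative
        (p * t powr (p - 1) * (1 - t) powr q + t powr p * (q * (1 - t) powr (q - 1) * -1))) (at t)"
      using t y by (intro derivative_eq_intros has_real_derivative_powr) auto
    moreover have eq: "p * t powr (p - 1) * (1 - t) powr q + t powr p * (q * (1 - t) powr (q - 1) * -1)
       = p * (t powr (p - 1) * (1 - t) powr (q + 1 - 1)) - q * (t powr (p + 1 - 1) * (1 - t) powr (q - 1))"
      by (simp add: algebra_simps)
    ultimately show "((\<lambda>t. t powr p * (1 - t) powr q) has_vector_derivative
       p * (t powr (p - 1) * (1 - t) powr (q + 1 - 1)) - q * (t powr (p + 1 - 1) * (1 - t) powr (q - 1))) (at t)"
      by (simp only: has_real_derivative_iff_has_vector_derivative)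
  qed (use y in auto)
  hence "integral {0..y} (\<lambda>t. p * (t powr (p - 1) * (1 - t) powr (q + 1 - 1)) - q * (t powr (p + 1 - 1) * (1 - t) powr (q - 1)))
     = y powr p * (1 - y) powr q" using p by (simp add: integral_unique)
  moreover have "integral {0..y} (\<lambda>t. p * (t powr (p - 1) * (1 - t) powr (q + 1 - 1)) - q * (t powr (p + 1 - 1) * (1 - t) powr (q - 1)))
     = p * J p (q+1) - q * J (p+1) q"
    unfolding J_def
    using integrable_cmul[OF int1, of p] integrable_cmul[OF int2, of q]
    by (subst integral_diff) auto
  ultimately have e1: "p * J p (q+1) - q * J (p+1) q = y powr p * (1 - y) powr q" by simp
  have pt: "t powr (p - 1) * (1 - t) powr (q - 1) =
     t powr (p - 1) * (1 - t) powr (q + 1 - 1) + t powr (p + 1 - 1) * (1 - t) powr (q - 1)"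
    if "t \<in> {0..y}" for t
  proof (cases "t = 0")
    case False
    hence tp: "t > 0" using that by auto
    have "1 - t > 0" using that y by auto
    have a: "t powr (p + 1 - 1) = t powr (p - 1) * t" using tp powr_add[of t "p - 1" 1] by simp
    have b: "(1 - t) powr (q + 1 - 1) = (1 - t) powr (q - 1) * (1 - t)" using \<open>1 - t > 0\<close> powr_add[of "1 - t" "q - 1" 1]
      by simp
    show ?thesis unfolding a b by (simp add: algebra_simps)
  qed simp
  have e2: "J p q = J p (q+1) + J (p+1) q"
    unfolding J_def
    by (subst integral_add[OF int1 int2, symmetric]) (rule integral_cong, rule pt)
  have qn: "q \<notin> \<int>\<^sub>\<le>\<^sub>0" using q by (auto elim: nonpos_Ints_cases)
  have Bq: "(p + q) * Beta p (q + 1) = q * Beta p q" by (rule Beta_plus1_right[OF qn])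
  have Bpos: "Beta p q > 0" using p q by (simp add: Beta_def)
  have Jq1: "J p (q+1) = (q * J p q + y powr p * (1 - y) powr q) / (p + q)"
    using e1 e2 p q by (simp add: field_simps)
  have B1: "Beta p (q+1) = q * Beta p q / (p + q)" using Bq p q by (simp add: field_simps)
  have "inc_beta y p (q + 1) = J p (q+1) / Beta p (q+1)" by (simp add: inc_beta_def J_def)
  also have "\<dots> = (q * J p q + y powr p * (1 - y) powr q) / (q * Beta p q)"
    unfolding Jq1 B1 using p q by (intro div_div_cancel) auto
  finally have i1: "inc_beta y p (q + 1) = (q * J p q + y powr p * (1 - y) powr q) / (q * Beta p q)" .
  have i0: "inc_beta y p q = J p q / Beta p q" by (simp add: inc_beta_def J_def)
  show ?thesis unfolding i1 i0 using q Bpos by (simp add: field_simps)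
qed

lemma inc_beta_bounds:
  fixes a b y :: real
  assumes "a > 0" "b > 0" "0 \<le> y" "y \<le> 1"
  shows "0 \<le> inc_beta y a b \<and> inc_beta y a b \<le> 1"
proof -
  have Bpos: "Beta a b > 0" using assms by (simp add: Beta_def)
  have I1: "integral {0..1} (\<lambda>t. t powr (a - 1) * (1 - t) powr (b - 1)) = Beta a b"
    using has_integral_Beta_real[OF assms(1,2)] by (rule integral_unique)
  have nn: "integral {0..y} (\<lambda>t. t powr (a - 1) * (1 - t) powr (b - 1)) \<ge> 0"
    by (rule integral_nonneg[OF J_integrable[OF assms]]) auto
  have le: "integral {0..y} (\<lambda>t. t powr (a - 1) * (1 - t) powr (b - 1))
      \<le> integral {0..1} (\<lambda>t. t powr (a - 1) * (1 - t) powr (b - 1))"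
    by (rule integral_subset_le[OF _ J_integrable[OF assms] integrable_Beta'[OF assms(1,2)]])
       (use assms in auto)
  show ?thesis using nn le Bpos unfolding inc_beta_def I1 by (simp add: divide_simps)
qed

lemma pos_not_nonpos_Int: "(a::real) > 0 \<Longrightarrow> a \<notin> \<int>\<^sub>\<le>\<^sub>0"
  by (auto elim!: nonpos_Ints_cases)

lemma inv_Beta_shift:
  fixes p q :: real and j :: nat
  assumes "p > 0" "q > 0"
  shows "1 / Beta (p + real j) q = (pochhammer (p + q) j / pochhammer p j) / Beta p q"
proof -
  have g: "Gamma (p + real j) > 0" "Gamma p > 0" "Gamma q > 0" "Gamma (p+q) > 0"
       "Gamma (p + q + real j) > 0" using assms by auto
  have "pochhammer (p + q) j = Gamma (p + q + real j) / Gamma (p + q)"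
    using assms by (intro pochhammer_Gamma pos_not_nonpos_Int) auto
  moreover have "pochhammer p j = Gamma (p + real j) / Gamma p"
    using assms by (intro pochhammer_Gamma pos_not_nonpos_Int) auto
  moreover have "p + real j + q = p + q + real j" by simp
  ultimately show ?thesis using g unfolding Beta_def by (simp add: field_simps)
qed

lemma term_identity:
  fixes p q x y :: real and j :: nat
  assumes "p > 0" "q > 0" "y > 0"
  shows "(x / 2) ^ j / fact j * (y powr (p + real j) * (1 - y) powr q / (q * Beta (p + real j) q))
     = (y powr p * (1 - y) powr q / (q * Beta p q)) *
       (pochhammer (p + q) j / pochhammer p j * (x * y / 2) ^ j / fact j)"
proof -
  have yp: "y powr (p + real j) = y powr p * y ^ j"
    using assms by (simp add: powr_add powr_realpow)
  have "y powr (p + real j) * (1 - y) powr q / (q * Beta (p + real j) q)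
      = y powr (p + real j) * (1 - y) powr q / q * (1 / Beta (p + real j) q)" by simp
  also have "\<dots> = y powr p * y ^ j * (1 - y) powr q / q * ((pochhammer (p + q) j / pochhammer p j) / Beta p q)"
    unfolding inv_Beta_shift[OF assms(1,2)] yp ..
  finally have e: "y powr (p + real j) * (1 - y) powr q / (q * Beta (p + real j) q)
      = y powr p * y ^ j * (1 - y) powr q / q * ((pochhammer (p + q) j / pochhammer p j) / Beta p q)" .
  show ?thesis unfolding e by (simp add: power_mult_distrib power_divide field_simps)
qed

lemma nc_summable:
  fixes p b x y :: real
  assumes "p > 0" "b > 0" "x \<ge> 0" "0 < y" "y < 1"
  shows "summable (\<lambda>j. (x / 2) ^ j / fact j * inc_beta y (p + real j) b)"
proof (rule summable_comparison_test)
  show "summable (\<lambda>j. inverse (fact j) * (x / 2) ^ j)" by (rule summable_exp)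
  show "\<exists>N. \<forall>n\<ge>N. norm ((x / 2) ^ n / fact n * inc_beta y (p + real n) b) \<le> inverse (fact n) * (x / 2) ^ n"
  proof (intro exI allI impI)
    fix n :: nat
    have bd: "0 \<le> inc_beta y (p + real n) b \<and> inc_beta y (p + real n) b \<le> 1"
      using assms by (intro inc_beta_bounds) auto
    have nn: "(x / 2) ^ n / fact n \<ge> 0" using assms by simp
    have "norm ((x / 2) ^ n / fact n * inc_beta y (p + real n) b) = (x / 2) ^ n / fact n * inc_beta y (p + real n) b"
      using mult_nonneg_nonneg[OF nn conjunct1[OF bd]] by (metis real_norm_def abs_of_nonneg)
    also have "\<dots> \<le> (x / 2) ^ n / fact n * 1" using bd nn by (intro mult_left_mono) auto
    finally show "norm ((x / 2) ^ n / fact n * inc_beta y (p + real n) b) \<le> inverse (fact n) * (x / 2) ^ n"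
      by (simp add: field_simps)
  qed
qed

lemma nc_diff:
  fixes p q x y :: real
  assumes p: "p > 0" and q: "q > 0" and x: "x \<ge> 0" and y: "0 < y" "y < 1"
  shows "summable (\<lambda>j. pochhammer (p + q) j / pochhammer p j * (x * y / 2) ^ j / fact j) \<and>
         nc_beta p (q + 1) x y - nc_beta p q x y =
           exp (- x / 2) * (y powr p * (1 - y) powr q / (q * Beta p q)) * kummerM (p + q) p (x * y / 2)"
proof -
  define K where "K = y powr p * (1 - y) powr q / (q * Beta p q)"
  define m where "m j = pochhammer (p + q) j / pochhammer p j * (x * y / 2) ^ j / fact j" for j :: nat
  define a1 where "a1 j = (x / 2) ^ j / fact j * inc_beta y (p + real j) (q + 1)" for j :: nat
  define a0 where "a0 j = (x / 2) ^ j / fact j * inc_beta y (p + real j) q" for j :: nat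
  have Kpos: "K > 0" using p q y unfolding K_def by (simp add: Beta_def)
  have s1: "summable a1" unfolding a1_def using assms by (intro nc_summable) auto
  have s0: "summable a0" unfolding a0_def using assms by (intro nc_summable) auto
  have d: "a1 j - a0 j = K * m j" for j
  proof -
    have "a1 j - a0 j = (x / 2) ^ j / fact j * (inc_beta y (p + real j) (q + 1) - inc_beta y (p + real j) q)"
      unfolding a1_def a0_def by (simp add: algebra_simps)
    also have "\<dots> = (x / 2) ^ j / fact j * (y powr (p + real j) * (1 - y) powr q / (q * Beta (p + real j) q))"
      using assms by (subst inc_beta_rec) auto
    also have "\<dots> = K * m j" unfolding K_def m_def by (rule term_identity) (use assms in auto)
    finally show ?thesis .
  qed
  have sd: "summable (\<lambda>j. a1 j - a0 j)" using s1 s0 by (rule summable_diff)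
  hence "summable (\<lambda>j. (a1 j - a0 j) / K)" by (rule summable_divide)
  moreover have "(\<lambda>j. (a1 j - a0 j) / K) = m" using Kpos d by auto
  ultimately have sm: "summable m" by simp
  have "nc_beta p (q + 1) x y - nc_beta p q x y = exp (- x / 2) * (suminf a1 - suminf a0)"
    unfolding nc_beta_def a1_def a0_def by (simp add: algebra_simps)
  also have "suminf a1 - suminf a0 = (\<Sum>j. K * m j)" using suminf_diff[OF s1 s0] d by simp
  also have "\<dots> = K * suminf m" by (rule suminf_mult[OF sm])
  finally show ?thesis using sm unfolding K_def m_def kummerM_def by simp
qed

lemma KK_alg: "(s::real) > 0 \<Longrightarrow> q > 0 \<Longrightarrow> B > 0 \<Longrightarrow>
   A * z / (q * B) = s / q * z * (A / (s * B))"
  by (simp add: field_simps)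

lemma final_alg: "(M0::real) \<noteq> 0 \<Longrightarrow> E * (r * K0) * M1 - r * (M1 / M0) * (E * K0 * M0) = 0"
  by (simp add: field_simps)

theorem mainTheorem6:
  fixes p q x y :: real
  assumes "p > 0" and "x \<ge> 0" and "0 < y" and "y < 1" and "q > 1"
  defines "c \<equiv> (p + q - 1) / q * (1 - y) *
                 (kummerM (p + q) p (x * y / 2) / kummerM (p + q - 1) p (x * y / 2))"
  shows "nc_beta p (q + 1) x y - (1 + c) * nc_beta p q x y + c * nc_beta p (q - 1) x y = 0 \<and>
         nc_beta_compl p (q + 1) x y - (1 + c) * nc_beta_compl p q x y
           + c * nc_beta_compl p (q - 1) x y = 0"
proof -
  note p = assms(1) and x = assms(2) and y = assms(3,4) and q = assms(5)
  define E where "E = exp (- x / 2)"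
  define M1 where "M1 = kummerM (p + q) p (x * y / 2)"
  define M0 where "M0 = kummerM (p + q - 1) p (x * y / 2)"
  define K1 where "K1 = y powr p * (1 - y) powr q / (q * Beta p q)"
  define K0 where "K0 = y powr p * (1 - y) powr (q - 1) / ((q - 1) * Beta p (q - 1))"
  have D1: "nc_beta p (q + 1) x y - nc_beta p q x y = E * K1 * M1"
    using nc_diff[of p q x y] assms unfolding E_def K1_def M1_def by auto
  have N0: "summable (\<lambda>j. pochhammer (p + (q - 1)) j / pochhammer p j * (x * y / 2) ^ j / fact j) \<and>
         nc_beta p (q - 1 + 1) x y - nc_beta p (q - 1) x y =
           exp (- x / 2) * (y powr p * (1 - y) powr (q - 1) / ((q - 1) * Beta p (q - 1))) * kummerM (p + (q - 1)) p (x * y / 2)"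
    using assms by (intro nc_diff) auto
  have D0: "nc_beta p q x y - nc_beta p (q - 1) x y = E * K0 * M0"
    using N0 unfolding E_def K0_def M0_def by (simp add: algebra_simps)
  have sm0: "summable (\<lambda>j. pochhammer (p + q - 1) j / pochhammer p j * (x * y / 2) ^ j / fact j)"
    using N0 by (simp add: algebra_simps)
  have M0pos: "M0 > 0" unfolding M0_def kummerM_def
  proof (rule suminf_pos2[OF sm0, where i=0])
    fix n :: nat
    have "pochhammer (p + q - 1) n > 0" "pochhammer p n > 0" using p q by (auto intro!: pochhammer_pos)
    thus "0 \<le> pochhammer (p + q - 1) n / pochhammer p n * (x * y / 2) ^ n / fact n"
      using x y by auto
  qed simp
  have qn: "q - 1 \<notin> \<int>\<^sub>\<le>\<^sub>0" using q by (intro pos_not_nonpos_Int) auto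
  have Bq: "(p + (q - 1)) * Beta p (q - 1 + 1) = (q - 1) * Beta p (q - 1)" by (rule Beta_plus1_right[OF qn])
  hence Bq': "(p + q - 1) * Beta p q = (q - 1) * Beta p (q - 1)" by (simp add: algebra_simps)
  have Bpos: "Beta p q > 0" "Beta p (q - 1) > 0" using p q by (simp_all add: Beta_def)
  have yq: "(1 - y) powr q = (1 - y) powr (q - 1) * (1 - y)"
    using y powr_add[of "1 - y" "q - 1" 1] by simp
  have K0': "K0 = y powr p * (1 - y) powr (q - 1) / ((p + q - 1) * Beta p q)"
    unfolding K0_def Bq' ..
  have K1': "K1 = y powr p * (1 - y) powr (q - 1) * (1 - y) / (q * Beta p q)"
    unfolding K1_def yq by simp
  have pq: "p + q - 1 > 0" using p q by simp
  have KK: "K1 = (p + q - 1) / q * (1 - y) * K0"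
    unfolding K1' K0' using pq q Bpos by (intro KK_alg) auto
  have c: "c = (p + q - 1) / q * (1 - y) * (M1 / M0)" unfolding c_def M1_def M0_def ..
  have main: "nc_beta p (q + 1) x y - (1 + c) * nc_beta p q x y + c * nc_beta p (q - 1) x y = 0"
  proof -
    have "nc_beta p (q + 1) x y - (1 + c) * nc_beta p q x y + c * nc_beta p (q - 1) x y
        = (nc_beta p (q + 1) x y - nc_beta p q x y) - c * (nc_beta p q x y - nc_beta p (q - 1) x y)"
      by (simp add: algebra_simps)
    also have "\<dots> = E * K1 * M1 - c * (E * K0 * M0)" unfolding D1 D0 ..
    also have "\<dots> = 0" unfolding KK c using M0pos by (intro final_alg) auto
    finally show ?thesis .
  qed
  moreover have "nc_beta_compl p (q + 1) x y - (1 + c) * nc_beta_compl p q x y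
           + c * nc_beta_compl p (q - 1) x y
         = - (nc_beta p (q + 1) x y - (1 + c) * nc_beta p q x y + c * nc_beta p (q - 1) x y)"
    unfolding nc_beta_compl_def by (simp add: algebra_simps)
  ultimately show ?thesis by simp
qed

end
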